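(* (1) A geodesic metric space is $(L,C)$-quasi-isometric to a countable simplicial tree for some $L\geqslant 1$, $C\geqslant 0$ if and only if it is $(1,C')$-quasi-isometric to a countable simplicial tree for some $C'\geqslant 0$. (2) A geodesic metric space is $(L,C)$-quasi-isometric to a locally finite simplicial tree for some $L\geqslant 1$, $C\geqslant 0$ if and only if it is $(1,C')$-quasi-isometric to a locally finite simplicial tree for some $C'\geqslant 0$.
   Context: An $(L,C)$-quasi-isometry $f:(X,d_X)\to(Y,d_Y)$ satisfies $\frac1L d_X(a,b)-C\leqslant d_Y(f(a),f(b))\leqslant Ld_X(a,b)+C$ for all $a,b$, and every point of $Y$ is within distance $C$ of $f(X)$. A simplicial tree is a 1-dimensional simplicial complex which is an $\mathbb{R}$-tree for the path metric in which each edge has length 1; it is countable if it has countably many vertices, and locally finite if every vertex has finitely many neighbours. *)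

theory Defs
  imports "HOL-Analysis.Analysis"
begin

definition geodesic_metric_space :: "'a set \<Rightarrow> ('a \<Rightarrow> 'a \<Rightarrow> real) \<Rightarrow> bool" where
  "geodesic_metric_space X d \<longleftrightarrow> Metric_space X d \<and>
     (\<forall>x\<in>X. \<forall>y\<in>X. \<exists>g :: real \<Rightarrow> 'a.
        g 0 = x \<and> g (d x y) = y \<and> g ` {0..d x y} \<subseteq> X \<and>
        (\<forall>s\<in>{0..d x y}. \<forall>t\<in>{0..d x y}. d (g s) (g t) = \<bar>s - t\<bar>))"

definition quasi_isometry ::
  "real \<Rightarrow> real \<Rightarrow> 'a set \<Rightarrow> ('a \<Rightarrow> 'a \<Rightarrow> real) \<Rightarrow> 'b set \<Rightarrow> ('b \<Rightarrow> 'b \<Rightarrow> real)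
   \<Rightarrow> ('a \<Rightarrow> 'b) \<Rightarrow> bool" where
  "quasi_isometry L C X dX Y dY f \<longleftrightarrow>
     f ` X \<subseteq> Y \<and>
     (\<forall>a\<in>X. \<forall>b\<in>X. dX a b / L - C \<le> dY (f a) (f b) \<and> dY (f a) (f b) \<le> L * dX a b + C) \<and>
     (\<forall>y\<in>Y. \<exists>x\<in>X. dY y (f x) \<le> C)"

definition gdist :: "(nat \<Rightarrow> nat \<Rightarrow> bool) \<Rightarrow> nat \<Rightarrow> nat \<Rightarrow> nat" where
  "gdist E x y = (LEAST n. (E ^^ n) x y)"

definition simplicial_tree :: "nat set \<Rightarrow> (nat \<Rightarrow> nat \<Rightarrow> bool) \<Rightarrow> bool" where
  "simplicial_tree V E \<longleftrightarrow>
     V \<noteq> {} \<and>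
     (\<forall>x y. E x y \<longrightarrow> x \<in> V \<and> y \<in> V \<and> E y x \<and> x \<noteq> y) \<and>
     (\<forall>x\<in>V. \<forall>y\<in>V. \<exists>n. (E ^^ n) x y) \<and>
     \<not> (\<exists>xs. 3 \<le> length xs \<and> distinct xs \<and>
           (\<forall>i. Suc i < length xs \<longrightarrow> E (xs ! i) (xs ! Suc i)) \<and> E (last xs) (hd xs))"

definition locally_finite_graph :: "nat set \<Rightarrow> (nat \<Rightarrow> nat \<Rightarrow> bool) \<Rightarrow> bool" where
  "locally_finite_graph V E \<longleftrightarrow> (\<forall>v\<in>V. finite {w. E v w})"

text \<open>A point is either a
vertex v, encoded (v,v,0), or an interior point of the edge {a,b} with a < b at distance
t \<in> (0,1) from a, encoded (a,b,t).\<close>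
definition tree_points :: "nat set \<Rightarrow> (nat \<Rightarrow> nat \<Rightarrow> bool) \<Rightarrow> (nat \<times> nat \<times> real) set" where
  "tree_points V E = {(v, v, 0) | v. v \<in> V} \<union> {(a, b, t) | a b t. E a b \<and> a < b \<and> 0 < t \<and> t < 1}"

definition tree_ends :: "nat \<times> nat \<times> real \<Rightarrow> (nat \<times> real) set" where
  "tree_ends p = (case p of (a, b, t) \<Rightarrow> if a = b then {(a, 0)} else {(a, t), (b, 1 - t)})"

text \<open>The path metric of the realisation (edges of length 1); in a tree this is given
by going straight along a common edge, or else through endpoints of the cells.\<close>
definition tree_dist :: "(nat \<Rightarrow> nat \<Rightarrow> bool) \<Rightarrow> nat \<times> nat \<times> real \<Rightarrow> nat \<times> nat \<times> real \<Rightarrow> real" where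
  "tree_dist E p q = (case p of (a, b, t) \<Rightarrow> case q of (a', b', t') \<Rightarrow>
     if a \<noteq> b \<and> a = a' \<and> b = b' then \<bar>t - t'\<bar>
     else Min {s + real (gdist E x y) + r | x s y r. (x, s) \<in> tree_ends p \<and> (y, r) \<in> tree_ends q})"

end

theory Submission
  imports Defs
begin


lemma relpowp_sym:
  assumes "\<And>x y. E x y \<Longrightarrow> E y x"
  shows "(E ^^ n) x y \<Longrightarrow> (E ^^ n) y x"
proof (induction n arbitrary: x y)
  case 0 then show ?case by simp
next
  case (Suc n)
  from Suc.prems obtain z where "(E ^^ n) x z" "E z y" by (rule relpowp_Suc_E)
  then show ?case using Suc.IH assms relpowp_Suc_I2 by metis
qed

lemma rtranclp_sym:
  assumes "\<And>x y. E x y \<Longrightarrow> E y x"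
  shows "E\<^sup>*\<^sup>* x y \<Longrightarrow> E\<^sup>*\<^sup>* y x"
proof (induction rule: rtranclp_induct)
  case base then show ?case by simp
next
  case (step y z) then show ?case using assms by (meson converse_rtranclp_into_rtranclp)
qed

lemma walk_split:
  assumes "(E ^^ n) x y"
  shows "(\<lambda>v w. E v w \<and> \<not>(v = u \<and> w = u') \<and> \<not>(v = u' \<and> w = u))\<^sup>*\<^sup>* x y
         \<or> (\<exists>i\<le>n. (E ^^ i) x u \<and> (E ^^ (n - i)) u y)"
  using assms
proof (induction n arbitrary: y)
  case 0 then show ?case by simp
next
  case (Suc n)
  let ?E = "(\<lambda>v w. E v w \<and> \<not>(v = u \<and> w = u') \<and> \<not>(v = u' \<and> w = u))"
  from Suc.prems obtain z where z: "(E ^^ n) x z" "E z y" by (rule relpowp_Suc_E)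
  from Suc.IH[OF z(1)] show ?case
  proof
    assume h: "?E\<^sup>*\<^sup>* x z"
    show ?case
    proof (cases "?E z y")
      case True
      have "?E\<^sup>*\<^sup>* x y" using h True by (rule rtranclp.rtrancl_into_rtrancl)
      then show ?thesis by blast
    next
      case False
      then have "(z = u \<and> y = u') \<or> (z = u' \<and> y = u)" using z(2) by auto
      then show ?thesis
      proof
        assume "z = u \<and> y = u'"
        moreover have "Suc n - n = 1" by simp
        ultimately have "n \<le> Suc n \<and> (E ^^ n) x u \<and> (E ^^ (Suc n - n)) u y" using z by (metis relpowp_1 le_SucI le_refl)
        then show ?thesis by blast
      next
        assume "z = u' \<and> y = u"
        then have "Suc n \<le> Suc n \<and> (E ^^ Suc n) x u \<and> (E ^^ (Suc n - Suc n)) u y" using z relpowp_Suc_I by fastforce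
        then show ?thesis by blast
      qed
    qed
  next
    assume "\<exists>i\<le>n. (E ^^ i) x u \<and> (E ^^ (n - i)) u z"
    then obtain i where i: "i \<le> n" "(E ^^ i) x u" "(E ^^ (n - i)) u z" by blast
    then have "(E ^^ Suc (n - i)) u y" using z relpowp_Suc_I by fastforce
    moreover have "Suc (n - i) = Suc n - i" using i by simp
    ultimately have "i \<le> Suc n \<and> (E ^^ i) x u \<and> (E ^^ (Suc n - i)) u y" using i by simp
    then show ?case by blast
  qed
qed

lemma rtranclp_path:
  "r\<^sup>*\<^sup>* x y \<Longrightarrow> \<exists>xs. xs \<noteq> [] \<and> hd xs = x \<and> last xs = y \<and> successively r xs"
proof (induction rule: rtranclp_induct)
  case base then show ?case by (intro exI[of _ "[x]"]) simp
next
  case (step y z)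
  then obtain xs where "xs \<noteq> [] \<and> hd xs = x \<and> last xs = y \<and> successively r xs" by blast
  then show ?case using step by (intro exI[of _ "xs @ [z]"]) (auto simp: successively_append_iff)
qed

lemma path_distinct:
  "successively r xs \<Longrightarrow> xs \<noteq> [] \<Longrightarrow>
   \<exists>ys. ys \<noteq> [] \<and> hd ys = hd xs \<and> last ys = last xs \<and> successively r ys \<and> distinct ys"
proof (induction "length xs" arbitrary: xs rule: less_induct)
  case less
  show ?case
  proof (cases "distinct xs")
    case True then show ?thesis using less.prems by blast
  next
    case False
    then obtain as v bs cs where xs: "xs = as @ [v] @ bs @ [v] @ cs" using not_distinct_decomp by blast
    let ?zs = "as @ [v] @ cs"
    have 1: "successively r (as @ [v])" "successively r ((bs @ [v]) @ cs)"
      using less.prems(1) successively_append_iff[of r "as @ [v]" "bs @ [v] @ cs"] unfolding xs by auto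
    have 2: "successively r cs" "cs = [] \<or> r v (hd cs)"
      using 1(2) successively_append_iff[of r "bs @ [v]" cs] by auto
    have "successively r ?zs"
      using 1(1) 2 successively_append_iff[of r "as @ [v]" cs] by auto
    moreover have "length ?zs < length xs" unfolding xs by simp
    moreover have "hd ?zs = hd xs" "last ?zs = last xs" unfolding xs by (cases as; simp; cases cs; simp)+
    ultimately show ?thesis using less.hyps[of ?zs] by fastforce
  qed
qed

locale stree =
  fixes V :: "nat set" and E :: "nat \<Rightarrow> nat \<Rightarrow> bool"
  assumes tree: "simplicial_tree V E"
begin

lemma E_V: "E x y \<Longrightarrow> x \<in> V \<and> y \<in> V" and E_sym: "E x y \<Longrightarrow> E y x"
  and E_irr: "E x y \<Longrightarrow> x \<noteq> y"
  using tree unfolding simplicial_tree_def by blast+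

lemma conn: "x \<in> V \<Longrightarrow> y \<in> V \<Longrightarrow> \<exists>n. (E ^^ n) x y"
  using tree unfolding simplicial_tree_def by blast

lemma nocycle: "\<not> (\<exists>xs. 3 \<le> length xs \<and> distinct xs \<and>
           (\<forall>i. Suc i < length xs \<longrightarrow> E (xs ! i) (xs ! Suc i)) \<and> E (last xs) (hd xs))"
  using tree unfolding simplicial_tree_def by blast

lemma gdist_walk: "x \<in> V \<Longrightarrow> y \<in> V \<Longrightarrow> (E ^^ gdist E x y) x y"
  unfolding gdist_def using conn by (meson LeastI)

lemma gdist_le: "(E ^^ n) x y \<Longrightarrow> gdist E x y \<le> n"
  unfolding gdist_def by (rule Least_le)

lemma gdist_self[simp]: "gdist E x x = 0"
  using gdist_le[of 0 x x] by simp

lemma gdist_sym_le: "x \<in> V \<Longrightarrow> y \<in> V \<Longrightarrow> gdist E x y \<le> gdist E y x"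
proof -
  assume "x \<in> V" "y \<in> V"
  then have "(E ^^ gdist E y x) y x" by (rule gdist_walk[rotated])
  then have "(E ^^ gdist E y x) x y" by (rule relpowp_sym[of E, rotated]) (rule E_sym)
  then show ?thesis by (rule gdist_le)
qed

lemma gdist_sym: "x \<in> V \<Longrightarrow> y \<in> V \<Longrightarrow> gdist E x y = gdist E y x"
  using gdist_sym_le by (simp add: le_antisym)

lemma gdist_tri: "x \<in> V \<Longrightarrow> y \<in> V \<Longrightarrow> z \<in> V \<Longrightarrow> gdist E x z \<le> gdist E x y + gdist E y z"
  using gdist_walk gdist_le relpowp_trans by metis

lemma gdist_edge: "E x y \<Longrightarrow> gdist E x y \<le> 1"
  by (metis gdist_le relpowp_1)

lemma edge_removal:
  assumes "E q p"
    and "(\<lambda>v w. E v w \<and> \<not>(v = p \<and> w = q) \<and> \<not>(v = q \<and> w = p))\<^sup>*\<^sup>* q p"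
  shows False
proof -
  let ?E = "(\<lambda>v w. E v w \<and> \<not>(v = p \<and> w = q) \<and> \<not>(v = q \<and> w = p))"
  obtain xs where xs: "xs \<noteq> []" "hd xs = q" "last xs = p" "successively ?E xs"
    using rtranclp_path[OF assms(2)] by blast
  obtain ys where ys': "ys \<noteq> []" "hd ys = hd xs" "last ys = last xs" "successively ?E ys" "distinct ys"
    using path_distinct[OF xs(4) xs(1)] by blast
  have ys: "ys \<noteq> []" "hd ys = q" "last ys = p" "successively ?E ys" "distinct ys"
    using ys' xs by simp_all
  have "q \<noteq> p" using E_irr assms(1) by blast
  have "length ys \<noteq> 1" using ys \<open>q \<noteq> p\<close> by (cases ys) auto
  moreover have "length ys \<noteq> 2"
  proof
    assume "length ys = 2"
    then obtain a b where "ys = [a, b]" by (cases ys; cases "tl ys") auto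
    then show False using ys by simp
  qed
  moreover have "length ys \<noteq> 0" using ys(1) by simp
  ultimately have "3 \<le> length ys" by linarith
  moreover have "\<forall>i. Suc i < length ys \<longrightarrow> E (ys ! i) (ys ! Suc i)"
    using ys(4) successively_nth by fastforce
  moreover have "E (last ys) (hd ys)" using ys assms(1) E_sym by simp
  ultimately show False using nocycle ys(5) by blast
qed

lemma walk_V: "(E ^^ n) x y \<Longrightarrow> x \<in> V \<Longrightarrow> y \<in> V"
proof (induction n arbitrary: y)
  case 0 then show ?case by simp
next
  case (Suc n) then show ?case using E_V by (meson relpowp_Suc_E)
qed

lemma geodesic_point:
  assumes "a \<in> V" "b \<in> V" "j \<le> gdist E a b"
  shows "\<exists>p\<in>V. gdist E a p = j \<and> gdist E p b = gdist E a b - j \<and> (E ^^ j) a p \<and> (E ^^ (gdist E a b - j)) p b"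
proof -
  let ?N = "gdist E a b"
  have "(E ^^ (j + (?N - j))) a b" using gdist_walk assms by simp
  then obtain p where p: "(E ^^ j) a p" "(E ^^ (?N - j)) p b" unfolding relpowp_add by blast
  have pV: "p \<in> V" using walk_V p(1) assms(1) by blast
  have 1: "gdist E a p \<le> j" "gdist E p b \<le> ?N - j" using gdist_le p by auto
  have "?N \<le> gdist E a p + gdist E p b" using gdist_tri assms pV by blast
  then show ?thesis using 1 p pV assms(3) by (intro bexI[of _ p]) auto
qed

definition rem :: "nat \<Rightarrow> nat \<Rightarrow> nat \<Rightarrow> nat \<Rightarrow> bool" where
  "rem p q v w \<longleftrightarrow> E v w \<and> \<not>(v = p \<and> w = q) \<and> \<not>(v = q \<and> w = p)"

lemma rem_comm: "rem p q = rem q p"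
  unfolding rem_def by (intro ext) blast

lemma rem_sym: "(rem p q)\<^sup>*\<^sup>* x y \<Longrightarrow> (rem p q)\<^sup>*\<^sup>* y x"
  by (rule rtranclp_sym[of "rem p q"]) (auto simp: rem_def E_sym)

lemma rem_eq: "rem p q = (\<lambda>v w. E v w \<and> \<not>(v = p \<and> w = q) \<and> \<not>(v = q \<and> w = p))"
  by (intro ext) (simp add: rem_def)

lemma walk_split': "(E ^^ n) x y \<Longrightarrow> (rem p q)\<^sup>*\<^sup>* x y \<or> (\<exists>i\<le>n. (E ^^ i) x p \<and> (E ^^ (n - i)) p y)"
  unfolding rem_eq by (rule walk_split)

lemma edge_removal': "E q p \<Longrightarrow> (rem p q)\<^sup>*\<^sup>* q p \<Longrightarrow> False"
  unfolding rem_eq by (rule edge_removal)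

lemma bottleneck:
  assumes aV: "a \<in> V" and bV: "b \<in> V" and pV: "p \<in> V" and j1: "1 \<le> j"
    and ap: "gdist E a p = j" and pb: "gdist E p b = gdist E a b - j" and jN: "j \<le> gdist E a b"
  shows "\<exists>S. a \<in> S \<and> b \<notin> S \<and> (\<forall>u w. u \<in> S \<longrightarrow> u \<in> V \<longrightarrow> w \<in> V \<longrightarrow> w \<notin> S \<longrightarrow> gdist E u p \<le> gdist E u w)"
proof -
  let ?N = "gdist E a b"
  obtain j' where j': "j = Suc j'" using j1 by (cases j) auto
  have "(E ^^ Suc j') a p" using gdist_walk[OF aV pV] ap j' by simp
  then obtain q where q: "(E ^^ j') a q" "E q p" by (rule relpowp_Suc_E)
  have qV: "q \<in> V" using q E_V by blast
  define S where "S = {v. (rem p q)\<^sup>*\<^sup>* q v}"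
  have "a \<in> S"
  proof -
    from walk_split'[OF q(1), of p q] show ?thesis
    proof
      assume "(rem p q)\<^sup>*\<^sup>* a q" then show ?thesis using rem_sym S_def by blast
    next
      assume "\<exists>i\<le>j'. (E ^^ i) a p \<and> (E ^^ (j' - i)) p q"
      then obtain i where "i \<le> j'" "(E ^^ i) a p" by blast
      then have "gdist E a p \<le> j'" using gdist_le by fastforce
      then show ?thesis using ap j' by simp
    qed
  qed
  have pbw: "(E ^^ (?N - j)) p b" using gdist_walk[OF pV bV] pb by simp
  have "(rem p q)\<^sup>*\<^sup>* p b"
  proof -
    from walk_split'[OF pbw, of q p] show ?thesis
    proof
      assume "(rem q p)\<^sup>*\<^sup>* p b" then show ?thesis using rem_comm by simp
    next
      assume "\<exists>i\<le>?N - j. (E ^^ i) p q \<and> (E ^^ (?N - j - i)) q b"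
      then obtain i where "i \<le> ?N - j" "(E ^^ (?N - j - i)) q b" by blast
      then have "gdist E q b \<le> ?N - j" using gdist_le by fastforce
      moreover have "gdist E a q \<le> j'" using gdist_le q by blast
      moreover have "?N \<le> gdist E a q + gdist E q b" using gdist_tri aV bV qV by blast
      ultimately show ?thesis using j' jN by simp
    qed
  qed
  have "b \<notin> S"
  proof
    assume "b \<in> S"
    then have "(rem p q)\<^sup>*\<^sup>* q b" unfolding S_def by simp
    moreover have "(rem p q)\<^sup>*\<^sup>* b p" using rem_sym \<open>(rem p q)\<^sup>*\<^sup>* p b\<close> by blast
    ultimately have "(rem p q)\<^sup>*\<^sup>* q p" by (rule rtranclp_trans)
    then show False using edge_removal'[OF q(2)] by blast
  qed
  have "gdist E u p \<le> gdist E u w" if "u \<in> S" "u \<in> V" "w \<in> V" "w \<notin> S" for u w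
  proof -
    from walk_split'[OF gdist_walk[OF that(2,3)], of p q] show ?thesis
    proof
      assume "(rem p q)\<^sup>*\<^sup>* u w"
      moreover have "(rem p q)\<^sup>*\<^sup>* q u" using that(1) unfolding S_def by simp
      ultimately have "(rem p q)\<^sup>*\<^sup>* q w" using rtranclp_trans by metis
      then have "w \<in> S" unfolding S_def by simp
      then show ?thesis using that(4) by blast
    next
      assume "\<exists>i\<le>gdist E u w. (E ^^ i) u p \<and> (E ^^ (gdist E u w - i)) p w"
      then obtain i where "i \<le> gdist E u w" "(E ^^ i) u p" by blast
      then show ?thesis using gdist_le[of i u p] by linarith
    qed
  qed
  then show ?thesis using \<open>a \<in> S\<close> \<open>b \<notin> S\<close> by blast
qed

end



locale rtree =
  fixes V :: "nat set" and par :: "nat \<Rightarrow> nat" and lv :: "nat \<Rightarrow> nat" and r :: nat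
  assumes rV: "r \<in> V" and lvr: "lv r = 0"
    and lv0: "\<And>a. a \<in> V \<Longrightarrow> lv a = 0 \<Longrightarrow> a = r"
    and parV: "\<And>a. a \<in> V \<Longrightarrow> 0 < lv a \<Longrightarrow> par a \<in> V"
    and lvpar: "\<And>a. a \<in> V \<Longrightarrow> 0 < lv a \<Longrightarrow> lv (par a) = lv a - 1"
begin

definition TE :: "nat \<Rightarrow> nat \<Rightarrow> bool" where
  "TE a b \<longleftrightarrow> a \<in> V \<and> b \<in> V \<and> ((0 < lv a \<and> b = par a) \<or> (0 < lv b \<and> a = par b))"

lemma TE_sym: "TE a b \<Longrightarrow> TE b a" unfolding TE_def by blast

lemma TE_lv: "TE a b \<Longrightarrow> (0 < lv a \<and> b = par a \<and> lv b = lv a - 1) \<or> (0 < lv b \<and> a = par b \<and> lv a = lv b - 1)"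
proof -
  assume "TE a b"
  then have V: "a \<in> V" "b \<in> V" and c: "(0 < lv a \<and> b = par a) \<or> (0 < lv b \<and> a = par b)"
    unfolding TE_def by auto
  from c show ?thesis
  proof
    assume h: "0 < lv a \<and> b = par a"
    then show ?thesis using lvpar[OF V(1)] by simp
  next
    assume h: "0 < lv b \<and> a = par b"
    then show ?thesis using lvpar[OF V(2)] by simp
  qed
qed

lemma TE_irr: "TE a b \<Longrightarrow> a \<noteq> b"
  using TE_lv by fastforce

lemma TE_nbr: "TE c w \<Longrightarrow> lv w \<le> lv c \<Longrightarrow> w = par c"
  using TE_lv by fastforce

lemma up_walk: "a \<in> V \<Longrightarrow> i \<le> lv a \<Longrightarrow>
   (TE ^^ i) a ((par ^^ i) a) \<and> (par ^^ i) a \<in> V \<and> lv ((par ^^ i) a) = lv a - i"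
proof (induction i)
  case 0 then show ?case by simp
next
  case (Suc i)
  then have IH: "(TE ^^ i) a ((par ^^ i) a)" "(par ^^ i) a \<in> V" "lv ((par ^^ i) a) = lv a - i" by auto
  let ?c = "(par ^^ i) a"
  have pos: "0 < lv ?c" using IH(3) Suc.prems by simp
  have "TE ?c (par ?c)" unfolding TE_def using pos IH(2) parV by blast
  then have "(TE ^^ Suc i) a (par ?c)" using IH(1) by (rule relpowp_Suc_I[rotated])
  then show ?case using parV[OF IH(2) pos] lvpar[OF IH(2) pos] IH(3) by simp
qed

lemma to_root: "a \<in> V \<Longrightarrow> (TE ^^ lv a) a r"
  using up_walk[of a "lv a"] lv0 by auto

lemma is_tree: "simplicial_tree V TE"
proof -
  have c: "\<exists>n. (TE ^^ n) x y" if "x \<in> V" "y \<in> V" for x y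
  proof -
    have "(TE ^^ lv y) r y" using to_root[OF that(2)] relpowp_sym[of TE] TE_sym by blast
    then show ?thesis using relpowp_trans[OF to_root[OF that(1)]] by blast
  qed
  have nc: False if xs: "3 \<le> length xs" "distinct xs"
      "\<forall>i. Suc i < length xs \<longrightarrow> TE (xs ! i) (xs ! Suc i)" "TE (last xs) (hd xs)" for xs
  proof -
    define n where "n = length xs"
    define nx where "nx i = (if Suc i < n then Suc i else 0)" for i
    have adj: "TE (xs ! i) (xs ! nx i)" if "i < n" for i
    proof (cases "Suc i < n")
      case True then show ?thesis using xs(3) nx_def n_def by simp
    next
      case False
      then have "i = n - 1" using that by simp
      moreover have "xs \<noteq> []" using xs(1) by auto
      then have "xs ! (n - 1) = last xs" "xs ! 0 = hd xs" using n_def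
        by (simp_all add: last_conv_nth hd_conv_nth)
      ultimately show ?thesis using xs(4) False nx_def by simp
    qed
    have fin: "finite (lv ` set xs)" "lv ` set xs \<noteq> {}" using xs(1) by auto
    obtain c where c: "c \<in> set xs" "lv c = Max (lv ` set xs)" using Max_in[OF fin] by auto
    then obtain i0 where i0: "i0 < n" "xs ! i0 = c" using n_def by (auto simp: in_set_conv_nth)
    have maxc: "lv (xs ! k) \<le> lv c" if "k < n" for k
      using c(2) fin(1) that n_def by auto
    define pi where "pi = (if i0 = 0 then n - 1 else i0 - 1)"
    have pin: "pi < n" "nx pi = i0" using i0 xs(1) n_def unfolding pi_def nx_def by auto
    have qin: "nx i0 < n" using xs(1) n_def unfolding nx_def by auto
    have "TE c (xs ! pi)" using adj[OF pin(1)] pin(2) i0 TE_sym by simp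
    then have 1: "xs ! pi = par c" using TE_nbr maxc pin(1) by blast
    have "TE c (xs ! nx i0)" using adj[OF i0(1)] i0 by simp
    then have 2: "xs ! nx i0 = par c" using TE_nbr maxc qin by blast
    have "pi \<noteq> nx i0" using i0 xs(1) n_def unfolding pi_def nx_def by auto
    moreover have "xs ! pi = xs ! nx i0" using 1 2 by simp
    ultimately show False using nth_eq_iff_index_eq[OF xs(2), of pi "nx i0"] pin(1) qin n_def by simp
  qed
  have "V \<noteq> {}" using rV by blast
  moreover have "\<forall>x y. TE x y \<longrightarrow> x \<in> V \<and> y \<in> V \<and> TE y x \<and> x \<noteq> y"
  proof (intro allI impI)
    fix x y assume "TE x y"
    then show "x \<in> V \<and> y \<in> V \<and> TE y x \<and> x \<noteq> y"
      using TE_sym[of x y] TE_irr[of x y] by (simp add: TE_def)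
  qed
  moreover have "\<forall>x\<in>V. \<forall>y\<in>V. \<exists>n. (TE ^^ n) x y" using c by blast
  moreover have "\<not> (\<exists>xs. 3 \<le> length xs \<and> distinct xs \<and>
           (\<forall>i. Suc i < length xs \<longrightarrow> TE (xs ! i) (xs ! Suc i)) \<and> TE (last xs) (hd xs))"
    using nc by blast
  ultimately show ?thesis unfolding simplicial_tree_def by blast
qed

sublocale T: stree V TE by (unfold_locales) (rule is_tree)

lemma gdist_upper:
  assumes "a \<in> V" "b \<in> V" "i \<le> lv a" "j \<le> lv b" "(par ^^ i) a = (par ^^ j) b"
  shows "gdist TE a b \<le> i + j"
proof -
  have 1: "(TE ^^ i) a ((par ^^ i) a)" using up_walk[of a i] assms by simp
  have "(TE ^^ j) b ((par ^^ i) a)" using up_walk[of b j] assms by simp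
  then have "(TE ^^ j) ((par ^^ i) a) b" by (rule relpowp_sym[of TE, rotated]) (rule TE_sym)
  with 1 have "(TE ^^ (i + j)) a b" by (rule relpowp_trans)
  then show ?thesis by (rule T.gdist_le)
qed

lemma walk_lower:
  assumes "a \<in> V"
  shows "(TE ^^ n) a b \<Longrightarrow> \<exists>i j. i \<le> lv a \<and> j \<le> lv b \<and> (par ^^ i) a = (par ^^ j) b \<and> i + j \<le> n"
proof (induction n arbitrary: b)
  case 0 then show ?case by (intro exI[of _ 0]) auto
next
  case (Suc n)
  from Suc.prems obtain c where c: "(TE ^^ n) a c" "TE c b" by (rule relpowp_Suc_E)
  from Suc.IH[OF c(1)] obtain i j where ij: "i \<le> lv a" "j \<le> lv c" "(par ^^ i) a = (par ^^ j) c" "i + j \<le> n"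
    by blast
  have cV: "c \<in> V" "b \<in> V" using c(2) TE_def by auto
  from c(2) have "(0 < lv c \<and> b = par c) \<or> (0 < lv b \<and> c = par b)" unfolding TE_def by blast
  then show ?case
  proof
    assume h: "0 < lv c \<and> b = par c"
    have lb: "lv b = lv c - 1" using h lvpar cV by blast
    show ?case
    proof (cases j)
      case 0
      then have "(par ^^ i) a = c" using ij by simp
      then have "lv c = lv a - i" using up_walk[OF assms ij(1)] by simp
      then have "Suc i \<le> lv a" using h by simp
      moreover have "(par ^^ Suc i) a = (par ^^ 0) b" using \<open>(par ^^ i) a = c\<close> h by simp
      ultimately show ?thesis using ij by (intro exI[of _ "Suc i"] exI[of _ 0]) auto
    next
      case (Suc j')
      have "(par ^^ j') b = (par ^^ j) c" using h Suc by (simp add: funpow_swap1)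
      then show ?thesis using ij lb Suc by (intro exI[of _ i] exI[of _ j']) auto
    qed
  next
    assume h: "0 < lv b \<and> c = par b"
    have lc: "lv c = lv b - 1" using h lvpar cV by blast
    have "(par ^^ Suc j) b = (par ^^ j) c" using h by (simp add: funpow_swap1)
    then show ?case using ij lc h by (intro exI[of _ i] exI[of _ "Suc j"]) auto
  qed
qed

lemma gdist_lower:
  assumes "a \<in> V" "b \<in> V"
  shows "\<exists>i j. i \<le> lv a \<and> j \<le> lv b \<and> (par ^^ i) a = (par ^^ j) b \<and> i + j \<le> gdist TE a b"
  using walk_lower[OF assms(1) T.gdist_walk[OF assms]] .

end



lemma crossing: "R\<^sup>*\<^sup>* x y \<Longrightarrow> Q x \<Longrightarrow> \<not> Q y \<Longrightarrow> \<exists>u w. R u w \<and> Q u \<and> \<not> Q w"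
  by (induction rule: rtranclp_induct) auto

locale qtree =
  fixes X :: "'a set" and d :: "'a \<Rightarrow> 'a \<Rightarrow> real" and V :: "nat set" and E :: "nat \<Rightarrow> nat \<Rightarrow> bool"
    and L :: real and C1 :: real and f0 :: "'a \<Rightarrow> nat" and bp :: 'a
  assumes geoX: "geodesic_metric_space X d"
    and treeVE: "simplicial_tree V E"
    and L1: "1 \<le> L" and C1: "0 \<le> C1"
    and f0V: "\<And>x. x \<in> X \<Longrightarrow> f0 x \<in> V"
    and qi_lo: "\<And>x y. x \<in> X \<Longrightarrow> y \<in> X \<Longrightarrow> d x y / L - C1 \<le> real (gdist E (f0 x) (f0 y))"
    and qi_up: "\<And>x y. x \<in> X \<Longrightarrow> y \<in> X \<Longrightarrow> real (gdist E (f0 x) (f0 y)) \<le> L * d x y + C1"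
    and oX: "bp \<in> X"
begin

sublocale T: stree V E by unfold_locales (rule treeVE)

lemma MS: "Metric_space X d" using geoX unfolding geodesic_metric_space_def by blast

lemma d_nonneg[simp]: "0 \<le> d x y" by (rule Metric_space.nonneg[OF MS])
lemma d_comm: "d x y = d y x" by (rule Metric_space.commute[OF MS])
lemma d_tri: "x \<in> X \<Longrightarrow> y \<in> X \<Longrightarrow> z \<in> X \<Longrightarrow> d x z \<le> d x y + d y z"
  by (rule Metric_space.triangle[OF MS])
lemma d_zero: "x \<in> X \<Longrightarrow> y \<in> X \<Longrightarrow> d x y = 0 \<longleftrightarrow> x = y"
  by (rule Metric_space.zero[OF MS])
lemma d_self[simp]: "x \<in> X \<Longrightarrow> d x x = 0" using d_zero by blast

lemma geodesic_ex: "x \<in> X \<Longrightarrow> y \<in> X \<Longrightarrow> \<exists>g :: real \<Rightarrow> 'a.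
        g 0 = x \<and> g (d x y) = y \<and> g ` {0..d x y} \<subseteq> X \<and>
        (\<forall>s\<in>{0..d x y}. \<forall>t\<in>{0..d x y}. d (g s) (g t) = \<bar>s - t\<bar>)"
  using geoX unfolding geodesic_metric_space_def by blast

definition h :: "'a \<Rightarrow> real" where "h x = d bp x"

definition geo :: "'a \<Rightarrow> real \<Rightarrow> 'a" where
  "geo x = (SOME g. g 0 = bp \<and> g (d bp x) = x \<and> g ` {0..d bp x} \<subseteq> X \<and>
        (\<forall>s\<in>{0..d bp x}. \<forall>t\<in>{0..d bp x}. d (g s) (g t) = \<bar>s - t\<bar>))"

lemma geo_props:
  assumes "x \<in> X"
  shows "geo x 0 = bp" "geo x (h x) = x" "\<And>t. t \<in> {0..h x} \<Longrightarrow> geo x t \<in> X"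
    "\<And>s t. s \<in> {0..h x} \<Longrightarrow> t \<in> {0..h x} \<Longrightarrow> d (geo x s) (geo x t) = \<bar>s - t\<bar>"
proof -
  let ?P = "\<lambda>g. g 0 = bp \<and> g (d bp x) = x \<and> g ` {0..d bp x} \<subseteq> X \<and>
        (\<forall>s\<in>{0..d bp x}. \<forall>t\<in>{0..d bp x}. d (g s) (g t) = \<bar>s - t\<bar>)"
  have "?P (geo x)" unfolding geo_def using someI_ex[OF geodesic_ex[OF oX assms]] .
  then show "geo x 0 = bp" "geo x (h x) = x" "\<And>t. t \<in> {0..h x} \<Longrightarrow> geo x t \<in> X"
    "\<And>s t. s \<in> {0..h x} \<Longrightarrow> t \<in> {0..h x} \<Longrightarrow> d (geo x s) (geo x t) = \<bar>s - t\<bar>"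
    unfolding h_def by auto
qed

lemma h_nonneg[simp]: "0 \<le> h x" unfolding h_def by simp

lemma h_geo: "x \<in> X \<Longrightarrow> 0 \<le> t \<Longrightarrow> t \<le> h x \<Longrightarrow> h (geo x t) = t"
  using geo_props(4)[of x 0 t] geo_props(1)[of x] unfolding h_def by auto

lemma d_geo_end: "x \<in> X \<Longrightarrow> 0 \<le> t \<Longrightarrow> t \<le> h x \<Longrightarrow> d (geo x t) x = h x - t"
  using geo_props(4)[of x t "h x"] geo_props(2)[of x] by auto

lemma h_lip: "x \<in> X \<Longrightarrow> y \<in> X \<Longrightarrow> h y \<le> h x + d x y"
  unfolding h_def using d_tri oX by blast

definition s :: real where "s = 1 + L * C1"
definition K :: real where "K = L * s + C1"

lemma s_ge1: "1 \<le> s" unfolding s_def using L1 C1 by simp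

definition stepA :: "'a set \<Rightarrow> 'a \<Rightarrow> 'a \<Rightarrow> bool" where
  "stepA A x y \<longleftrightarrow> x \<in> A \<and> y \<in> A \<and> d x y \<le> s"

lemma stepA_sym: "stepA A x y \<Longrightarrow> stepA A y x" unfolding stepA_def using d_comm by auto

lemma chainA_sym: "(stepA A)\<^sup>*\<^sup>* x y \<Longrightarrow> (stepA A)\<^sup>*\<^sup>* y x"
  using rtranclp_sym[of "stepA A"] stepA_sym by blast

lemma chain_seg:
  assumes "lo \<le> hi" and inA: "\<And>t. t \<in> {lo..hi} \<Longrightarrow> g t \<in> A"
    and dg: "\<And>a b. a \<in> {lo..hi} \<Longrightarrow> b \<in> {lo..hi} \<Longrightarrow> d (g a) (g b) \<le> \<bar>a - b\<bar>"
  shows "(stepA A)\<^sup>*\<^sup>* (g lo) (g hi)"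
proof -
  have H: "\<forall>t. t \<in> {lo..hi} \<longrightarrow> t \<le> lo + real n \<longrightarrow> (stepA A)\<^sup>*\<^sup>* (g lo) (g t)" for n
  proof (induction n)
    case 0 then show ?case by auto
  next
    case (Suc n)
    show ?case
    proof (intro allI impI)
      fix t assume t: "t \<in> {lo..hi}" "t \<le> lo + real (Suc n)"
      show "(stepA A)\<^sup>*\<^sup>* (g lo) (g t)"
      proof (cases "t \<le> lo + real n")
        case True then show ?thesis using Suc t by blast
      next
        case False
        define t' where "t' = max lo (t - 1)"
        have t'in: "t' \<in> {lo..hi}" "t' \<le> lo + real n" using t False unfolding t'_def by auto
        have "(stepA A)\<^sup>*\<^sup>* (g lo) (g t')" using Suc t'in by blast
        moreover have "stepA A (g t') (g t)"
          unfolding stepA_def using inA t'in t dg[OF t'in(1) t(1)] s_ge1 unfolding t'_def by auto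
        ultimately show ?thesis by (rule rtranclp.rtrancl_into_rtrancl)
      qed
    qed
  qed
  obtain n :: nat where n: "hi - lo \<le> real n" using real_arch_simple by blast
  show ?thesis using H[of n] n assms(1) by auto
qed

lemma f0_step: "stepA A u w \<Longrightarrow> A \<subseteq> X \<Longrightarrow> real (gdist E (f0 u) (f0 w)) \<le> K"
proof -
  assume a: "stepA A u w" "A \<subseteq> X"
  then have "real (gdist E (f0 u) (f0 w)) \<le> L * d u w + C1" using qi_up unfolding stepA_def by blast
  also have "\<dots> \<le> L * s + C1" using a L1 unfolding stepA_def by (simp add: mult_left_mono)
  finally show ?thesis unfolding K_def .
qed

lemma d_le_gdist: "x \<in> X \<Longrightarrow> y \<in> X \<Longrightarrow> d x y \<le> L * (real (gdist E (f0 x) (f0 y)) + C1)"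
  using qi_lo[of x y] L1 by (simp add: field_simps)

lemma gdist_tri': "x \<in> V \<Longrightarrow> y \<in> V \<Longrightarrow> z \<in> V \<Longrightarrow>
   real (gdist E x z) \<le> real (gdist E x y) + real (gdist E y z)"
  using T.gdist_tri by (metis of_nat_add of_nat_le_iff)

definition U :: "real \<Rightarrow> 'a set" where "U m = {x \<in> X. m \<le> h x}"

abbreviation conn :: "real \<Rightarrow> 'a \<Rightarrow> 'a \<Rightarrow> bool" where "conn m \<equiv> (stepA (U m))\<^sup>*\<^sup>*"

lemma U_X: "U m \<subseteq> X" unfolding U_def by auto

lemma conn_geo: "x \<in> X \<Longrightarrow> 0 \<le> m \<Longrightarrow> m \<le> h x \<Longrightarrow> conn m (geo x m) x"
  using chain_seg[of m "h x" "geo x" "U m"] geo_props[of x] h_geo[of x] unfolding U_def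
  by (smt (verit, best) atLeastAtMost_iff mem_Collect_eq)

definition B :: real where "B = L * (2 * K + C1)"
definition M :: real where "M = K + L * B + C1"
definition D :: real where "D = L * (2 * M + 1 + C1)"

lemma key:
  assumes xX: "x \<in> X" and yX: "y \<in> X" and m0: "0 \<le> m" and mx: "m \<le> h x" and my: "m \<le> h y"
    and cxy: "conn m x y"
  shows "d (geo x m) (geo y m) \<le> D"
proof -
  define x' where "x' = geo x m"
  define y' where "y' = geo y m"
  have x'X: "x' \<in> X" and y'X: "y' \<in> X" using geo_props xX yX m0 mx my unfolding x'_def y'_def by auto
  define a where "a = f0 x'"
  define b where "b = f0 y'"
  have aV: "a \<in> V" and bV: "b \<in> V" using f0V x'X y'X a_def b_def by auto
  define N where "N = gdist E a b"
  have dN: "d x' y' \<le> L * (real N + C1)" using d_le_gdist[OF x'X y'X] unfolding N_def a_def b_def .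
  show ?thesis
  proof (cases "real N \<le> 2 * M + 1")
    case True
    then have "L * (real N + C1) \<le> L * (2 * M + 1 + C1)" using L1 by (simp add: mult_left_mono)
    then show ?thesis using dN unfolding D_def x'_def y'_def by simp
  next
    case False
    have Kpos: "0 \<le> K" unfolding K_def s_def using L1 C1 by simp
    have Bpos: "0 \<le> B" unfolding B_def using L1 C1 Kpos by simp
    have Mpos: "0 \<le> M" unfolding M_def using L1 C1 Kpos Bpos by simp
    define j where "j = N div 2"
    have j1: "1 \<le> j" using False Mpos unfolding j_def by linarith
    have jN: "j \<le> N" unfolding j_def by simp
    obtain p where pV: "p \<in> V" and ap: "gdist E a p = j" and pb: "gdist E p b = N - j"
      using T.geodesic_point[OF aV bV, of j] jN unfolding N_def by blast
    obtain S where S: "a \<in> S" "b \<notin> S"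
      "\<And>u w. u \<in> S \<Longrightarrow> u \<in> V \<Longrightarrow> w \<in> V \<Longrightarrow> w \<notin> S \<Longrightarrow> gdist E u p \<le> gdist E u w"
      using T.bottleneck[OF aV bV pV j1 ap pb[unfolded N_def] jN[unfolded N_def]] by blast
    have cross: "real (gdist E (f0 u) p) \<le> K" if "stepA A u w" "A \<subseteq> X" "f0 u \<in> S" "f0 w \<notin> S" for A u w
    proof -
      have "u \<in> X" "w \<in> X" using that unfolding stepA_def by auto
      then have "gdist E (f0 u) p \<le> gdist E (f0 u) (f0 w)" using S(3) that f0V by blast
      then show ?thesis using f0_step[OF that(1,2)] by linarith
    qed
    have "conn m x' y'"
    proof -
      have "conn m x' x" using conn_geo[OF xX m0 mx] unfolding x'_def .
      moreover have "conn m y y'" using chainA_sym[OF conn_geo[OF yX m0 my]] unfolding y'_def .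
      ultimately show ?thesis using cxy by (meson rtranclp_trans)
    qed
    then obtain u w where uw: "stepA (U m) u w" "f0 u \<in> S" "f0 w \<notin> S"
      using crossing[of "stepA (U m)" x' y' "\<lambda>z. f0 z \<in> S"] S a_def b_def by blast
    have uX: "u \<in> X" and hu: "m \<le> h u" using uw(1) unfolding stepA_def U_def by auto
    have up: "real (gdist E (f0 u) p) \<le> K" using cross[OF uw(1) U_X uw(2,3)] .
    define A2 where "A2 = geo x ` {0..m} \<union> geo y ` {0..m}"
    have A2X: "A2 \<subseteq> X" unfolding A2_def using geo_props xX yX mx my by auto
    have c2: "(stepA A2)\<^sup>*\<^sup>* x' y'"
    proof -
      have 1: "(stepA A2)\<^sup>*\<^sup>* (geo x 0) (geo x m)"
        by (rule chain_seg) (use m0 mx geo_props[OF xX] in \<open>auto simp: A2_def\<close>)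
      have 2: "(stepA A2)\<^sup>*\<^sup>* (geo y 0) (geo y m)"
        by (rule chain_seg) (use m0 my geo_props[OF yX] in \<open>auto simp: A2_def\<close>)
      show ?thesis using chainA_sym[OF 1] 2 geo_props(1)[OF xX] geo_props(1)[OF yX] unfolding x'_def y'_def
        by (metis rtranclp_trans)
    qed
    then obtain u' w' where uw': "stepA A2 u' w'" "f0 u' \<in> S" "f0 w' \<notin> S"
      using crossing[of "stepA A2" x' y' "\<lambda>z. f0 z \<in> S"] S a_def b_def by blast
    have up': "real (gdist E (f0 u') p) \<le> K" using cross[OF uw'(1) A2X uw'(2,3)] .
    have u'A: "u' \<in> A2" using uw' unfolding stepA_def by auto
    then have u'X: "u' \<in> X" using A2X by auto
    have "real (gdist E (f0 u') (f0 u)) \<le> 2 * K"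
      using gdist_tri'[of "f0 u'" p "f0 u"] up up' f0V uX u'X pV T.gdist_sym[of p "f0 u"] by simp
    then have du: "d u' u \<le> B"
      using d_le_gdist[OF u'X uX] L1 unfolding B_def
      by (smt (verit, ccfv_SIG) mult_left_mono)
    have close: "real (gdist E (f0 u') (f0 z)) \<le> L * B + C1" if "d u' z \<le> B" "z \<in> X" for z
    proof -
      have "real (gdist E (f0 u') (f0 z)) \<le> L * d u' z + C1" using qi_up u'X that by blast
      also have "\<dots> \<le> L * B + C1" using that L1 by (simp add: mult_left_mono)
      finally show ?thesis by simp
    qed
    from u'A obtain t z where tz: "t \<in> {0..m}" "z \<in> {x, y}" "u' = geo z t"
      unfolding A2_def by blast
    have zX: "z \<in> X" and mz: "m \<le> h z" using tz xX yX mx my by auto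
    have ht: "h u' = t" using h_geo[OF zX] tz mz by auto
    have "h u \<le> h u' + d u' u" using h_lip u'X uX by blast
    then have "m - t \<le> B" using hu ht du by linarith
    moreover have "d u' (geo z m) = m - t" using geo_props(4)[OF zX, of t m] tz mz by auto
    ultimately have "real (gdist E (f0 u') (f0 (geo z m))) \<le> L * B + C1"
      using close geo_props(3)[OF zX] m0 mz by auto
    then have "real (gdist E p (f0 (geo z m))) \<le> M"
      using gdist_tri'[of p "f0 u'" "f0 (geo z m)"] up' T.gdist_sym[of p "f0 u'"] pV f0V u'X
        geo_props(3)[OF zX] m0 mz unfolding M_def by auto
    moreover have "z = x \<or> z = y" using tz by blast
    ultimately have "real j \<le> M \<or> real (N - j) \<le> M"
      using ap pb T.gdist_sym[OF aV pV] a_def b_def x'_def y'_def by auto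
    then show ?thesis using False unfolding j_def by linarith
  qed
qed

end



context stree
begin

lemma walk_set_finite:
  assumes lf: "locally_finite_graph V E" and vV: "v \<in> V"
  shows "finite {w. (E ^^ i) v w}"
proof (induction i)
  case 0 then show ?case by simp
next
  case (Suc i)
  have "{w. (E ^^ Suc i) v w} \<subseteq> (\<Union>u\<in>{w. (E ^^ i) v w}. {w. E u w})"
    by (auto elim: relpowp_Suc_E)
  moreover have "finite (\<Union>u\<in>{w. (E ^^ i) v w}. {w. E u w})"
  proof (rule finite_UN_I[OF Suc.IH])
    fix u assume "u \<in> {w. (E ^^ i) v w}"
    then have "u \<in> V" using walk_V vV by blast
    then show "finite {w. E u w}" using lf unfolding locally_finite_graph_def by blast
  qed
  ultimately show ?case by (rule finite_subset)
qed

lemma ball_finite: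
  assumes lf: "locally_finite_graph V E" and vV: "v \<in> V"
  shows "finite {w \<in> V. gdist E v w \<le> k}"
proof -
  have "{w \<in> V. gdist E v w \<le> k} \<subseteq> (\<Union>i\<in>{..k}. {w. (E ^^ i) v w})"
    using gdist_walk vV by fastforce
  moreover have "finite (\<Union>i\<in>{..k}. {w. (E ^^ i) v w})"
    using walk_set_finite[OF lf vV] by blast
  ultimately show ?thesis by (rule finite_subset)
qed

lemma Sset_eq: "{s + real (gdist E x y) + r | x s y r. (x, s) \<in> A \<and> (y, r) \<in> B}
   = (\<lambda>((x, s), (y, r)). s + real (gdist E x y) + r) ` (A \<times> B)"
  by force

lemma ends_props:
  assumes "p \<in> tree_points V E"
  shows "finite (tree_ends p)" "tree_ends p \<noteq> {}"
    "\<exists>s0. (fst p, s0) \<in> tree_ends p \<and> 0 \<le> s0 \<and> s0 \<le> 1"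
    "\<And>x s. (x, s) \<in> tree_ends p \<Longrightarrow> x \<in> V \<and> 0 \<le> s \<and> s \<le> 1 \<and> gdist E (fst p) x \<le> 1"
    "fst p \<in> V"
proof -
  from assms consider (v) v where "v \<in> V" "p = (v, v, 0)"
    | (e) a b t where "E a b" "a < b" "0 < t" "t < 1" "p = (a, b, t)"
    unfolding tree_points_def by blast
  then have "finite (tree_ends p) \<and> tree_ends p \<noteq> {} \<and>
    (\<exists>s0. (fst p, s0) \<in> tree_ends p \<and> 0 \<le> s0 \<and> s0 \<le> 1) \<and>
    (\<forall>x s. (x, s) \<in> tree_ends p \<longrightarrow> x \<in> V \<and> 0 \<le> s \<and> s \<le> 1 \<and> gdist E (fst p) x \<le> 1) \<and> fst p \<in> V"
  proof cases
    case v then show ?thesis by (auto simp: tree_ends_def)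
  next
    case e
    then have "a \<noteq> b" by simp
    then show ?thesis using e E_V gdist_edge[OF e(1)] by (auto simp: tree_ends_def)
  qed
  then show "finite (tree_ends p)" "tree_ends p \<noteq> {}"
    "\<exists>s0. (fst p, s0) \<in> tree_ends p \<and> 0 \<le> s0 \<and> s0 \<le> 1"
    "\<And>x s. (x, s) \<in> tree_ends p \<Longrightarrow> x \<in> V \<and> 0 \<le> s \<and> s \<le> 1 \<and> gdist E (fst p) x \<le> 1"
    "fst p \<in> V" by blast+
qed

lemma tree_dist_approx:
  assumes p: "p \<in> tree_points V E" and q: "q \<in> tree_points V E"
  shows "real (gdist E (fst p) (fst q)) \<le> tree_dist E p q + 2 \<and> tree_dist E p q \<le> real (gdist E (fst p) (fst q)) + 2"
proof -
  obtain a b t where pe: "p = (a, b, t)" by (cases p) auto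
  obtain a' b' t' where qe: "q = (a', b', t')" by (cases q) auto
  show ?thesis
  proof (cases "a \<noteq> b \<and> a = a' \<and> b = b'")
    case True
    then have "tree_dist E p q = \<bar>t - t'\<bar>" unfolding tree_dist_def pe qe by simp
    moreover have "0 < t \<and> t < 1" "0 < t' \<and> t' < 1" using p q True unfolding pe qe tree_points_def by auto
    moreover have "\<bar>t - t'\<bar> \<le> 1" using calculation(2,3) by (simp add: abs_le_iff)
    ultimately show ?thesis using True pe qe by simp
  next
    case False
    define SS where "SS = {s + real (gdist E x y) + r | x s y r. (x, s) \<in> tree_ends p \<and> (y, r) \<in> tree_ends q}"
    have td: "tree_dist E p q = Min SS" unfolding tree_dist_def SS_def pe qe prod.case
      by (simp only: if_not_P[OF False])
    have fin: "finite SS" unfolding SS_def Sset_eq using ends_props(1)[OF p] ends_props(1)[OF q] by simp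
    have ne: "SS \<noteq> {}" unfolding SS_def Sset_eq using ends_props(2)[OF p] ends_props(2)[OF q] by simp
    obtain s0 where s0: "(fst p, s0) \<in> tree_ends p" "0 \<le> s0" "s0 \<le> 1" using ends_props(3)[OF p] by blast
    obtain r0 where r0: "(fst q, r0) \<in> tree_ends q" "0 \<le> r0" "r0 \<le> 1" using ends_props(3)[OF q] by blast
    have "s0 + real (gdist E (fst p) (fst q)) + r0 \<in> SS" unfolding SS_def using s0 r0 by blast
    then have up: "Min SS \<le> real (gdist E (fst p) (fst q)) + 2" using Min_le[OF fin] s0 r0 by fastforce
    have "Min SS \<in> SS" using Min_in[OF fin ne] .
    then obtain x s y r where xsyr: "Min SS = s + real (gdist E x y) + r" "(x, s) \<in> tree_ends p" "(y, r) \<in> tree_ends q"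
      unfolding SS_def by blast
    have x: "x \<in> V" "0 \<le> s" "gdist E (fst p) x \<le> 1" using ends_props(4)[OF p xsyr(2)] by auto
    have y: "y \<in> V" "0 \<le> r" "gdist E (fst q) y \<le> 1" using ends_props(4)[OF q xsyr(3)] by auto
    have fV: "fst p \<in> V" "fst q \<in> V" using ends_props(5) p q by auto
    have "gdist E (fst p) (fst q) \<le> gdist E (fst p) x + gdist E x (fst q)" using gdist_tri fV x by blast
    also have "gdist E x (fst q) \<le> gdist E x y + gdist E y (fst q)" using gdist_tri fV x y by blast
    finally have "gdist E (fst p) (fst q) \<le> gdist E (fst p) x + (gdist E x y + gdist E y (fst q))" by simp
    moreover have "gdist E y (fst q) = gdist E (fst q) y" using gdist_sym fV y by simp
    ultimately have "gdist E (fst p) (fst q) \<le> gdist E x y + 2" using x y by linarith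
    then have lo: "real (gdist E (fst p) (fst q)) \<le> Min SS + 2" using xsyr(1) x y by linarith
    show ?thesis using up lo td by simp
  qed
qed

end



context qtree
begin

lemma conn_U: "conn m x y \<Longrightarrow> x \<in> U m \<Longrightarrow> y \<in> U m"
  by (induction rule: rtranclp_induct) (auto simp: stepA_def)

lemma conn_sym: "conn m x y \<Longrightarrow> conn m y x" by (rule chainA_sym)

lemma conn_mono:
  assumes "m' \<le> m" "conn m x y" shows "conn m' x y"
proof -
  have "stepA (U m) \<le> stepA (U m')" using assms(1) unfolding stepA_def U_def by auto
  then show ?thesis using assms(2) rtranclp_mono by (metis predicate2D)
qed

lemma U_mono: "m' \<le> m \<Longrightarrow> U m \<subseteq> U m'" unfolding U_def by auto

definition rep :: "nat \<Rightarrow> 'a \<Rightarrow> 'a" where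
  "rep n x = (SOME y. conn (real n) x y \<and> h y = real n)"

lemma rep_props:
  assumes "x \<in> U (real n)"
  shows "conn (real n) x (rep n x)" "h (rep n x) = real n" "rep n x \<in> U (real n)"
proof -
  have xX: "x \<in> X" and hx: "real n \<le> h x" using assms unfolding U_def by auto
  have "conn (real n) x (geo x (real n)) \<and> h (geo x (real n)) = real n"
    using conn_sym[OF conn_geo[OF xX _ hx]] h_geo[OF xX _ hx] by simp
  then have "conn (real n) x (rep n x) \<and> h (rep n x) = real n"
    unfolding rep_def by (rule someI)
  then show "conn (real n) x (rep n x)" "h (rep n x) = real n" "rep n x \<in> U (real n)"
    using conn_U assms by auto
qed

lemma rep_cong:
  assumes "conn (real n) x y" shows "rep n x = rep n y"
proof -
  have "(\<lambda>z. conn (real n) x z \<and> h z = real n) = (\<lambda>z. conn (real n) y z \<and> h z = real n)"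
    using assms conn_sym by (metis (no_types, lifting) rtranclp_trans)
  then show ?thesis unfolding rep_def by simp
qed

definition key :: "nat \<Rightarrow> 'a \<Rightarrow> nat" where "key n x = f0 (rep n x)"

lemma key_iff:
  assumes x: "x \<in> U (real n)" and y: "y \<in> U (real n)"
  shows "key n x = key n y \<longleftrightarrow> conn (real n) x y"
proof
  assume "conn (real n) x y" then show "key n x = key n y" unfolding key_def using rep_cong by simp
next
  assume k: "key n x = key n y"
  let ?r1 = "rep n x" and ?r2 = "rep n y"
  have r: "?r1 \<in> U (real n)" "?r2 \<in> U (real n)" using rep_props x y by auto
  then have rX: "?r1 \<in> X" "?r2 \<in> X" using U_X by auto
  have "d ?r1 ?r2 \<le> L * (real (gdist E (f0 ?r1) (f0 ?r2)) + C1)" using d_le_gdist rX by blast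
  also have "\<dots> = L * C1" using k unfolding key_def by simp
  also have "\<dots> \<le> s" unfolding s_def by simp
  finally have "stepA (U (real n)) ?r1 ?r2" unfolding stepA_def using r by blast
  then have "conn (real n) ?r1 ?r2" by blast
  moreover have "conn (real n) x ?r1" "conn (real n) ?r2 y" using rep_props x y conn_sym by blast+
  ultimately show "conn (real n) x y" by (meson rtranclp_trans)
qed

definition vid :: "nat \<Rightarrow> 'a \<Rightarrow> nat" where "vid n x = prod_encode (n, key n x)"
definition lv :: "nat \<Rightarrow> nat" where "lv a = fst (prod_decode a)"

lemma lv_vid[simp]: "lv (vid n x) = n" unfolding lv_def vid_def by simp

lemma vid_iff:
  assumes "x \<in> U (real n)" "y \<in> U (real n')"
  shows "vid n x = vid n' y \<longleftrightarrow> n = n' \<and> conn (real n) x y"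
  using key_iff assms unfolding vid_def by auto

definition Vt :: "nat set" where "Vt = {vid n x | n x. x \<in> U (real n)}"
definition pt :: "nat \<Rightarrow> 'a" where "pt a = (SOME x. x \<in> U (real (lv a)) \<and> a = vid (lv a) x)"
definition par :: "nat \<Rightarrow> nat" where "par a = vid (lv a - 1) (pt a)"
definition root :: nat where "root = vid 0 bp"

lemma par_vid:
  assumes x: "x \<in> U (real (Suc n))"
  shows "par (vid (Suc n) x) = vid n x"
proof -
  let ?a = "vid (Suc n) x"
  have "x \<in> U (real (lv ?a)) \<and> ?a = vid (lv ?a) x" using x by simp
  then have p: "pt ?a \<in> U (real (Suc n)) \<and> ?a = vid (Suc n) (pt ?a)"
    unfolding pt_def lv_vid by (rule someI)
  then have "vid (Suc n) x = vid (Suc n) (pt ?a)" by simp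
  then have "conn (real (Suc n)) x (pt ?a)" using vid_iff[OF x, of "pt ?a" "Suc n"] p by blast
  then have c: "conn (real n) x (pt ?a)" using conn_mono by (metis of_nat_le_iff le_SucI le_refl)
  have "x \<in> U (real n)" "pt ?a \<in> U (real n)" using x p U_mono[of "real n" "real (Suc n)"] by auto
  then have "vid n (pt ?a) = vid n x" using vid_iff c conn_sym by blast
  then show ?thesis unfolding par_def by simp
qed

lemma U0: "x \<in> X \<Longrightarrow> x \<in> U 0" unfolding U_def by simp

lemma rtree_inst: "rtree Vt par lv root"
proof
  show "root \<in> Vt" unfolding Vt_def root_def using U0[OF oX] by force
  show "lv root = 0" unfolding root_def by simp
next
  fix a assume "a \<in> Vt" "lv a = 0"
  then obtain x where x: "x \<in> U 0" "a = vid 0 x" unfolding Vt_def by auto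
  then have xX: "x \<in> X" using U_X by auto
  have "conn 0 (geo x 0) x" using conn_geo[OF xX] by simp
  then have "conn 0 bp x" using geo_props(1)[OF xX] by simp
  then show "a = root" unfolding root_def using x vid_iff U0[OF oX] conn_sym by simp
next
  fix a assume a: "a \<in> Vt" "0 < lv a"
  then obtain n x where x: "x \<in> U (real n)" "a = vid n x" unfolding Vt_def by auto
  then obtain n' where n': "n = Suc n'" using a by (cases n) auto
  have "par a = vid n' x" using par_vid x n' by simp
  moreover have "x \<in> U (real n')" using x n' U_mono[of "real n'" "real n"] by auto
  ultimately show "par a \<in> Vt" "lv (par a) = lv a - 1" unfolding Vt_def using x n' by auto
qed

sublocale R: rtree Vt par lv root by (rule rtree_inst)

lemma par_pow:
  assumes "x \<in> U (real n)" "i \<le> n" shows "(par ^^ i) (vid n x) = vid (n - i) x"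
  using assms(2)
proof (induction i)
  case 0 then show ?case by simp
next
  case (Suc i)
  then have "(par ^^ Suc i) (vid n x) = par (vid (Suc (n - Suc i)) x)"
    by (simp add: Suc_diff_Suc)
  also have "\<dots> = vid (n - Suc i) x"
    using par_vid assms(1) U_mono[of "real (Suc (n - Suc i))" "real n"] Suc.prems by auto
  finally show ?case .
qed

definition lev :: "'a \<Rightarrow> nat" where "lev x = nat \<lfloor>h x\<rfloor>"

lemma lev_props: "real (lev x) \<le> h x" "h x < real (lev x) + 1"
  unfolding lev_def using h_nonneg[of x] by linarith+

lemma lev_U: "x \<in> X \<Longrightarrow> x \<in> U (real (lev x))" unfolding U_def using lev_props by auto

lemma le_lev: "real l \<le> h x \<Longrightarrow> l \<le> lev x"
  unfolding lev_def by linarith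

definition gv :: "'a \<Rightarrow> nat" where "gv x = vid (lev x) x"

lemma gv_Vt: "x \<in> X \<Longrightarrow> gv x \<in> Vt" unfolding gv_def Vt_def using lev_U by blast

lemma lower_geo:
  assumes xX: "x \<in> X" and yX: "y \<in> X"
  shows "\<exists>l::nat. real l \<le> h x \<and> real l \<le> h y \<and> conn (real l) x y \<and> h x + h y - 2 * real l - 2 \<le> d x y"
proof -
  obtain g where g: "g 0 = x" "g (d x y) = y" "g ` {0..d x y} \<subseteq> X"
    "\<And>a b. a \<in> {0..d x y} \<Longrightarrow> b \<in> {0..d x y} \<Longrightarrow> d (g a) (g b) = \<bar>a - b\<bar>"
    using geodesic_ex[OF xX yX] by blast
  define ll where "ll = d x y"
  define ph where "ph t = h (g t)" for t
  have lip: "dist (ph a) (ph b) \<le> 1 * dist a b" if "a \<in> {0..ll}" "b \<in> {0..ll}" for a b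
  proof -
    have X: "g a \<in> X" "g b \<in> X" using g(3) that ll_def by auto
    have "h (g a) \<le> h (g b) + d (g b) (g a)" "h (g b) \<le> h (g a) + d (g a) (g b)"
      using h_lip X by auto
    moreover have "d (g a) (g b) = \<bar>a - b\<bar>" "d (g b) (g a) = \<bar>b - a\<bar>" using g(4) that ll_def by auto
    ultimately have "h (g a) \<le> h (g b) + \<bar>a - b\<bar>" "h (g b) \<le> h (g a) + \<bar>a - b\<bar>"
      by (simp_all add: abs_minus_commute)
    then show ?thesis unfolding ph_def dist_real_def by (simp add: abs_le_iff)
  qed
  have "continuous_on {0..ll} ph"
    by (rule lipschitz_on_continuous_on[of 1]) (rule lipschitz_onI[OF lip], auto)
  then obtain t0 where t0: "t0 \<in> {0..ll}" "\<And>t. t \<in> {0..ll} \<Longrightarrow> ph t0 \<le> ph t"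
    using continuous_attains_inf[of "{0..ll}" ph] ll_def by auto
  define k where "k = ph t0"
  define l where "l = nat \<lfloor>k\<rfloor>"
  have k0: "0 \<le> k" unfolding k_def ph_def by simp
  have lk: "real l \<le> k" "k < real l + 1" unfolding l_def using k0 by linarith+
  have hx: "k \<le> h x" using t0(2)[of 0] g(1) ll_def unfolding k_def ph_def by auto
  have hy: "k \<le> h y" using t0(2)[of ll] g(2) ll_def unfolding k_def ph_def by auto
  have "(stepA (U (real l)))\<^sup>*\<^sup>* (g 0) (g ll)"
  proof (rule chain_seg)
    show "0 \<le> ll" unfolding ll_def by simp
    show "g t \<in> U (real l)" if "t \<in> {0..ll}" for t
      using g(3) that t0(2)[OF that] lk ll_def unfolding U_def k_def ph_def by auto
    show "d (g a) (g b) \<le> \<bar>a - b\<bar>" if "a \<in> {0..ll}" "b \<in> {0..ll}" for a b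
      using g(4) that ll_def by auto
  qed
  then have c: "conn (real l) x y" using g(1,2) ll_def by simp
  have gt0X: "g t0 \<in> X" using g(3) t0(1) ll_def by auto
  have "h x \<le> h (g t0) + d (g t0) x" using h_lip gt0X xX by blast
  moreover have "d (g t0) x = t0" using g(4)[of t0 0] g(1) t0(1) ll_def by auto
  moreover have "h y \<le> h (g t0) + d (g t0) y" using h_lip gt0X yX by blast
  moreover have "d (g t0) y = ll - t0" using g(4)[of t0 ll] g(2) t0(1) ll_def by auto
  ultimately have "h x + h y - 2 * real l - 2 \<le> d x y" using lk unfolding k_def ph_def ll_def by linarith
  then show ?thesis using c hx hy lk by (intro exI[of _ l]) auto
qed

lemma upper_d:
  assumes xX: "x \<in> X" and yX: "y \<in> X" and lx: "real l \<le> h x" and ly: "real l \<le> h y"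
    and c: "conn (real l) x y"
  shows "d x y \<le> h x + h y - 2 * real l + D"
proof -
  have k: "d (geo x (real l)) (geo y (real l)) \<le> D" using key[OF xX yX _ lx ly c] by simp
  have gx: "geo x (real l) \<in> X" "geo y (real l) \<in> X" using geo_props(3) xX yX lx ly by auto
  have "d x y \<le> d x (geo x (real l)) + d (geo x (real l)) y" using d_tri xX yX gx by blast
  also have "d (geo x (real l)) y \<le> d (geo x (real l)) (geo y (real l)) + d (geo y (real l)) y"
    using d_tri yX gx by blast
  finally have "d x y \<le> d x (geo x (real l)) + (d (geo x (real l)) (geo y (real l)) + d (geo y (real l)) y)"
    by simp
  moreover have "d x (geo x (real l)) = h x - real l" using d_geo_end[OF xX _ lx] d_comm by simp
  moreover have "d (geo y (real l)) y = h y - real l" using d_geo_end[OF yX _ ly] by simp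
  ultimately show ?thesis using k by linarith
qed

lemma dist_gv:
  assumes xX: "x \<in> X" and yX: "y \<in> X"
  shows "real (gdist R.TE (gv x) (gv y)) \<le> d x y + 2" "d x y \<le> real (gdist R.TE (gv x) (gv y)) + D + 2"
proof -
  obtain l where l: "real l \<le> h x" "real l \<le> h y" "conn (real l) x y" "h x + h y - 2 * real l - 2 \<le> d x y"
    using lower_geo[OF xX yX] by blast
  have llev: "l \<le> lev x" "l \<le> lev y" using le_lev l by auto
  have Ul: "x \<in> U (real l)" "y \<in> U (real l)" using l xX yX unfolding U_def by auto
  have "(par ^^ (lev x - l)) (gv x) = vid l x" unfolding gv_def using par_pow[OF lev_U[OF xX]] llev by simp
  moreover have "(par ^^ (lev y - l)) (gv y) = vid l y" unfolding gv_def using par_pow[OF lev_U[OF yX]] llev by simp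
  moreover have "vid l x = vid l y" using vid_iff Ul l(3) by simp
  ultimately have eq: "(par ^^ (lev x - l)) (gv x) = (par ^^ (lev y - l)) (gv y)" by simp
  have le1: "lev x - l \<le> lv (gv x)" and le2: "lev y - l \<le> lv (gv y)" unfolding gv_def by simp_all
  have "gdist R.TE (gv x) (gv y) \<le> (lev x - l) + (lev y - l)"
    by (rule R.gdist_upper[OF gv_Vt[OF xX] gv_Vt[OF yX] le1 le2 eq])
  then have "real (gdist R.TE (gv x) (gv y)) \<le> real (lev x) - real l + (real (lev y) - real l)"
    using llev by linarith
  then show "real (gdist R.TE (gv x) (gv y)) \<le> d x y + 2" using lev_props[of x] lev_props[of y] l(4) by linarith
next
  obtain i j where ij: "i \<le> lv (gv x)" "j \<le> lv (gv y)" "(par ^^ i) (gv x) = (par ^^ j) (gv y)"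
    "i + j \<le> gdist R.TE (gv x) (gv y)"
    using R.gdist_lower[OF gv_Vt[OF xX] gv_Vt[OF yX]] by blast
  have ij': "i \<le> lev x" "j \<le> lev y" using ij unfolding gv_def by auto
  have "vid (lev x - i) x = vid (lev y - j) y"
    using ij(3) par_pow[OF lev_U[OF xX] ij'(1)] par_pow[OF lev_U[OF yX] ij'(2)] unfolding gv_def by simp
  moreover have "x \<in> U (real (lev x - i))" "y \<in> U (real (lev y - j))"
    using xX yX lev_props(1)[of x] lev_props(1)[of y] ij' by (auto simp: U_def of_nat_diff)
  ultimately have e: "lev x - i = lev y - j" "conn (real (lev x - i)) x y" using vid_iff by blast+
  define l where "l = lev x - i"
  have l1: "real l \<le> h x" using lev_props(1)[of x] ij' unfolding l_def by (simp add: of_nat_diff)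
  have l2: "real l \<le> h y" using lev_props(1)[of y] ij' e(1) unfolding l_def by (simp add: of_nat_diff)
  have l3: "conn (real l) x y" using e(2) unfolding l_def .
  have "d x y \<le> h x + h y - 2 * real l + D" by (rule upper_d[OF xX yX l1 l2 l3])
  moreover have "real l = real (lev x) - real i" "real l = real (lev y) - real j" using ij' e unfolding l_def by auto
  ultimately show "d x y \<le> real (gdist R.TE (gv x) (gv y)) + D + 2"
    using lev_props[of x] lev_props[of y] ij(4) by linarith
qed

lemma D_nonneg: "0 \<le> D"
proof -
  have "0 \<le> K" unfolding K_def s_def using L1 C1 by simp
  then have "0 \<le> B" unfolding B_def using L1 C1 by simp
  then have "0 \<le> M" unfolding M_def using L1 C1 \<open>0 \<le> K\<close> by simp
  then show ?thesis unfolding D_def using L1 C1 by simp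
qed

lemma gv_surj: "v \<in> Vt \<Longrightarrow> \<exists>z\<in>X. gv z = v"
proof -
  assume "v \<in> Vt"
  then obtain n x where x: "x \<in> U (real n)" "v = vid n x" unfolding Vt_def by auto
  have xX: "x \<in> X" and hx: "real n \<le> h x" using x unfolding U_def by auto
  define z where "z = geo x (real n)"
  have zX: "z \<in> X" using geo_props(3)[OF xX] hx z_def by auto
  have hz: "h z = real n" using h_geo[OF xX _ hx] z_def by simp
  then have "lev z = n" unfolding lev_def by simp
  moreover have "conn (real n) z x" using conn_geo[OF xX _ hx] z_def by simp
  moreover have "z \<in> U (real n)" using zX hz unfolding U_def by simp
  ultimately have "gv z = v" unfolding gv_def using vid_iff x by simp
  then show ?thesis using zX by blast
qed

end



context qtree
begin

lemma lf_Vt: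
  assumes lf: "locally_finite_graph V E"
  shows "locally_finite_graph Vt R.TE"
  unfolding locally_finite_graph_def
proof
  fix a assume "a \<in> Vt"
  then obtain n x where x: "x \<in> U (real n)" "a = vid n x" unfolding Vt_def by auto
  define x0 where "x0 = rep n x"
  have x0: "x0 \<in> U (real n)" "h x0 = real n" "conn (real n) x x0" using rep_props[OF x(1)] x0_def by auto
  have x0X: "x0 \<in> X" using x0 U_X by auto
  define R0 where "R0 = nat \<lceil>L * (D + 1) + C1\<rceil>"
  define Ball where "Ball = {w \<in> V. gdist E (f0 x0) w \<le> R0}"
  have finB: "finite Ball" unfolding Ball_def using T.ball_finite[OF lf f0V[OF x0X]] .
  have sub: "{w. R.TE a w} \<subseteq> {par a} \<union> (\<lambda>k. prod_encode (Suc n, k)) ` Ball"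
  proof
    fix w assume "w \<in> {w. R.TE a w}"
    then have tw: "R.TE a w" by simp
    then have wV: "w \<in> Vt" unfolding R.TE_def by simp
    from R.TE_lv[OF tw] show "w \<in> {par a} \<union> (\<lambda>k. prod_encode (Suc n, k)) ` Ball"
    proof
      assume "0 < lv a \<and> w = par a \<and> lv w = lv a - 1" then show ?thesis by simp
    next
      assume h1: "0 < lv w \<and> a = par w \<and> lv a = lv w - 1"
      obtain n' y where y: "y \<in> U (real n')" "w = vid n' y" using wV unfolding Vt_def by auto
      obtain n'' where n'': "n' = Suc n''" using h1 y by (cases n') auto
      have pw: "par w = vid n'' y" using par_vid y n'' by simp
      have apw: "a = par w" using h1 by blast
      have "vid n x = vid n'' y" using x(2) apw pw by simp
      moreover have "y \<in> U (real n'')" using y n'' U_mono[of "real n''" "real n'"] by auto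
      ultimately have nn: "n'' = n" and cxy: "conn (real n) x y" using vid_iff x by blast+
      define r where "r = rep (Suc n) y"
      have yU: "y \<in> U (real (Suc n))" using y n'' nn by simp
      have r: "r \<in> U (real (Suc n))" "h r = real (Suc n)" "conn (real (Suc n)) y r"
        using rep_props[OF yU] r_def by auto
      have rX: "r \<in> X" using r U_X by auto
      have "conn (real n) y r" using conn_mono[OF _ r(3)] by simp
      then have c: "conn (real n) x0 r" using conn_sym[OF x0(3)] cxy by (meson rtranclp_trans)
      have "d (geo x0 (real n)) (geo r (real n)) \<le> D"
        using key[OF x0X rX _ _ _ c] x0(2) r(2) by simp
      moreover have "geo x0 (real n) = x0" using geo_props(2)[OF x0X] x0(2) by simp
      moreover have "d (geo r (real n)) r = 1" using d_geo_end[OF rX, of "real n"] r(2) by simp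
      moreover have "d x0 r \<le> d x0 (geo r (real n)) + d (geo r (real n)) r"
        using d_tri x0X rX geo_props(3)[OF rX, of "real n"] r(2) by simp
      ultimately have dx0r: "d x0 r \<le> D + 1" by simp
      have "real (gdist E (f0 x0) (f0 r)) \<le> L * d x0 r + C1" using qi_up x0X rX by blast
      also have "\<dots> \<le> L * (D + 1) + C1" using dx0r L1 by (simp add: mult_left_mono)
      finally have "gdist E (f0 x0) (f0 r) \<le> R0" unfolding R0_def by linarith
      then have "f0 r \<in> Ball" unfolding Ball_def using f0V rX by simp
      moreover have "w = prod_encode (Suc n, f0 r)" using y n'' nn unfolding vid_def key_def r_def by simp
      ultimately show ?thesis by blast
    qed
  qed
  show "finite {w. R.TE a w}" using finite_subset[OF sub] finB by simp
qed

end

lemma tree_dist_vv: "tree_dist E (v, v, 0) (w, w, 0) = real (gdist E v w)"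
proof -
  have "{s + real (gdist E x y) + r | x s y r. (x, s) \<in> {(v, 0::real)} \<and> (y, r) \<in> {(w, 0::real)}}
        = {real (gdist E v w)}" by auto
  then show ?thesis unfolding tree_dist_def tree_ends_def by simp
qed

lemma main:
  fixes X :: "'a set" and d :: "'a \<Rightarrow> 'a \<Rightarrow> real"
  assumes geo: "geodesic_metric_space X d" and L1: "1 \<le> L" and C0: "0 \<le> C"
    and tr: "simplicial_tree V E"
    and qi: "quasi_isometry L C X d (tree_points V E) (tree_dist E) f"
  shows "\<exists>C' V' E' g. C' \<ge> 0 \<and> simplicial_tree V' E' \<and> (locally_finite_graph V E \<longrightarrow> locally_finite_graph V' E')
     \<and> quasi_isometry 1 C' X d (tree_points V' E') (tree_dist E') g"
proof -
  interpret T: stree V E using tr by unfold_locales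
  have fX: "\<And>x. x \<in> X \<Longrightarrow> f x \<in> tree_points V E" using qi unfolding quasi_isometry_def by auto
  have qlo: "\<And>a b. a \<in> X \<Longrightarrow> b \<in> X \<Longrightarrow> d a b / L - C \<le> tree_dist E (f a) (f b)"
    and qup: "\<And>a b. a \<in> X \<Longrightarrow> b \<in> X \<Longrightarrow> tree_dist E (f a) (f b) \<le> L * d a b + C"
    and qs: "\<And>y. y \<in> tree_points V E \<Longrightarrow> \<exists>x\<in>X. tree_dist E y (f x) \<le> C"
    using qi unfolding quasi_isometry_def by auto
  obtain v where "v \<in> V" using tr unfolding simplicial_tree_def by auto
  then have "(v, v, 0) \<in> tree_points V E" unfolding tree_points_def by auto
  then obtain bp where bp: "bp \<in> X" using qs by blast
  define f0 where "f0 x = fst (f x)" for x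
  have f0V: "\<And>x. x \<in> X \<Longrightarrow> f0 x \<in> V" unfolding f0_def using T.ends_props(5) fX by blast
  have lo: "d x y / L - (C + 2) \<le> real (gdist E (f0 x) (f0 y))" if "x \<in> X" "y \<in> X" for x y
    using qlo[OF that] T.tree_dist_approx[OF fX[OF that(1)] fX[OF that(2)]] unfolding f0_def by linarith
  have up: "real (gdist E (f0 x) (f0 y)) \<le> L * d x y + (C + 2)" if "x \<in> X" "y \<in> X" for x y
    using qup[OF that] T.tree_dist_approx[OF fX[OF that(1)] fX[OF that(2)]] unfolding f0_def by linarith
  interpret Q: qtree X d V E L "C + 2" f0 bp
    by unfold_locales (use geo tr L1 C0 f0V lo up bp in auto)
  define g where "g x = (Q.gv x, Q.gv x, 0::real)" for x
  define C' where "C' = Q.D + 2"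
  have C'0: "0 \<le> C'" using Q.D_nonneg unfolding C'_def by simp
  have "quasi_isometry 1 C' X d (tree_points Q.Vt Q.R.TE) (tree_dist Q.R.TE) g"
    unfolding quasi_isometry_def
  proof (intro conjI ballI)
    show "g ` X \<subseteq> tree_points Q.Vt Q.R.TE" unfolding g_def tree_points_def using Q.gv_Vt by auto
  next
    fix a b assume ab: "a \<in> X" "b \<in> X"
    have e: "tree_dist Q.R.TE (g a) (g b) = real (gdist Q.R.TE (Q.gv a) (Q.gv b))"
      unfolding g_def by (rule tree_dist_vv)
    show "d a b / 1 - C' \<le> tree_dist Q.R.TE (g a) (g b)"
      using Q.dist_gv(2)[OF ab] e unfolding C'_def by simp
    show "tree_dist Q.R.TE (g a) (g b) \<le> 1 * d a b + C'"
      using Q.dist_gv(1)[OF ab] e Q.D_nonneg unfolding C'_def by simp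
  next
    fix p assume p: "p \<in> tree_points Q.Vt Q.R.TE"
    then consider (v) v where "v \<in> Q.Vt" "p = (v, v, 0)"
      | (e) a b t where "Q.R.TE a b" "a < b" "0 < t" "t < 1" "p = (a, b, t)"
      unfolding tree_points_def by blast
    then show "\<exists>x\<in>X. tree_dist Q.R.TE p (g x) \<le> C'"
    proof cases
      case v
      then obtain z where z: "z \<in> X" "Q.gv z = v" using Q.gv_surj by blast
      have "tree_dist Q.R.TE p (g z) = 0" unfolding g_def using v z tree_dist_vv by simp
      then have "tree_dist Q.R.TE p (g z) \<le> C'" using C'0 by simp
      then show ?thesis using z(1) by blast
    next
      case e
      have aV: "a \<in> Q.Vt" using e(1) unfolding Q.R.TE_def by simp
      then obtain z where z: "z \<in> X" "Q.gv z = a" using Q.gv_surj by blast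
      have ab: "a \<noteq> b" using e(2) by simp
      define SS where "SS = {s + real (gdist Q.R.TE x y) + r | x s y r.
          (x, s) \<in> {(a, t), (b, 1 - t)} \<and> (y, r) \<in> {(a, 0::real)}}"
      have ncond: "\<not> (a \<noteq> b \<and> a = a \<and> b = a)" using ab by simp
      have "tree_dist Q.R.TE (a, b, t) (a, a, 0) = Min SS"
        unfolding tree_dist_def SS_def prod.case tree_ends_def if_not_P[OF ncond] using ab by simp
      moreover have "finite SS" unfolding SS_def Q.R.T.Sset_eq by simp
      moreover have "t \<in> SS" unfolding SS_def by force
      ultimately have "tree_dist Q.R.TE (a, b, t) (a, a, 0) \<le> t" using Min_le by metis
      then have "tree_dist Q.R.TE p (g z) \<le> C'" unfolding g_def using z e Q.D_nonneg C'_def by simp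
      then show ?thesis using z by blast
    qed
  qed
  moreover have "simplicial_tree Q.Vt Q.R.TE" by (rule Q.R.is_tree)
  moreover have "locally_finite_graph V E \<longrightarrow> locally_finite_graph Q.Vt Q.R.TE" using Q.lf_Vt by blast
  ultimately show ?thesis using C'0 by blast
qed

theorem corollary4p24:
  fixes X :: "'a set" and d :: "'a \<Rightarrow> 'a \<Rightarrow> real"
  assumes "geodesic_metric_space X d"
  shows "((\<exists>L C V E f. L \<ge> 1 \<and> C \<ge> 0 \<and> simplicial_tree V E \<and> countable V \<and>
            quasi_isometry L C X d (tree_points V E) (tree_dist E) f)
         \<longleftrightarrow> (\<exists>C' V E f. C' \<ge> 0 \<and> simplicial_tree V E \<and> countable V \<and>
            quasi_isometry 1 C' X d (tree_points V E) (tree_dist E) f))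
         \<and> ((\<exists>L C V E f. L \<ge> 1 \<and> C \<ge> 0 \<and> simplicial_tree V E \<and> locally_finite_graph V E \<and>
            quasi_isometry L C X d (tree_points V E) (tree_dist E) f)
         \<longleftrightarrow> (\<exists>C' V E f. C' \<ge> 0 \<and> simplicial_tree V E \<and> locally_finite_graph V E \<and>
            quasi_isometry 1 C' X d (tree_points V E) (tree_dist E) f))"
proof (intro conjI iffI)
  assume "\<exists>L C V E f. L \<ge> 1 \<and> C \<ge> 0 \<and> simplicial_tree V E \<and> countable V \<and>
            quasi_isometry L C X d (tree_points V E) (tree_dist E) f"
  then obtain L C V E f where h: "L \<ge> 1" "C \<ge> 0" "simplicial_tree V E"
      "quasi_isometry L C X d (tree_points V E) (tree_dist E) f" by blast
  from main[OF assms h] obtain C' V' E' g where "C' \<ge> 0" "simplicial_tree V' E'"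
      "quasi_isometry 1 C' X d (tree_points V' E') (tree_dist E') g" by blast
  moreover have "countable V'" by (rule countableI_type)
  ultimately show "\<exists>C' V E f. C' \<ge> 0 \<and> simplicial_tree V E \<and> countable V \<and>
            quasi_isometry 1 C' X d (tree_points V E) (tree_dist E) f" by blast
next
  assume "\<exists>C' V E f. C' \<ge> 0 \<and> simplicial_tree V E \<and> countable V \<and>
            quasi_isometry 1 C' X d (tree_points V E) (tree_dist E) f"
  then show "\<exists>L C V E f. L \<ge> 1 \<and> C \<ge> 0 \<and> simplicial_tree V E \<and> countable V \<and>
            quasi_isometry L C X d (tree_points V E) (tree_dist E) f" by (meson order_refl)
next
  assume "\<exists>L C V E f. L \<ge> 1 \<and> C \<ge> 0 \<and> simplicial_tree V E \<and> locally_finite_graph V E \<and>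
            quasi_isometry L C X d (tree_points V E) (tree_dist E) f"
  then obtain L C V E f where h: "L \<ge> 1" "C \<ge> 0" "simplicial_tree V E" "locally_finite_graph V E"
      "quasi_isometry L C X d (tree_points V E) (tree_dist E) f" by blast
  from main[OF assms h(1-3,5)] h(4) obtain C' V' E' g where "C' \<ge> 0" "simplicial_tree V' E'"
      "locally_finite_graph V' E'" "quasi_isometry 1 C' X d (tree_points V' E') (tree_dist E') g" by blast
  then show "\<exists>C' V E f. C' \<ge> 0 \<and> simplicial_tree V E \<and> locally_finite_graph V E \<and>
            quasi_isometry 1 C' X d (tree_points V E) (tree_dist E) f" by blast
next
  assume "\<exists>C' V E f. C' \<ge> 0 \<and> simplicial_tree V E \<and> locally_finite_graph V E \<and>
            quasi_isometry 1 C' X d (tree_points V E) (tree_dist E) f"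
  then show "\<exists>L C V E f. L \<ge> 1 \<and> C \<ge> 0 \<and> simplicial_tree V E \<and> locally_finite_graph V E \<and>
            quasi_isometry L C X d (tree_points V E) (tree_dist E) f" by (meson order_refl)
qed



end
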